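(* Let $G$ be a bounded metric operator in $\mathcal H$ and $A$ a closed densely defined operator in $\mathcal H$. If $A$ is self-adjoint in $\mathcal H(G)$, then $GA$ is symmetric in $\mathcal H$ and $A$ is quasi-Hermitian with respect to $G$. If moreover $G^{-1}$ is bounded, then $A$ is self-adjoint in $\mathcal H(G)$ if and only if $GA$ is self-adjoint in $\mathcal H$.
   Context: A metric operator in $\mathcal H$ is a self-adjoint operator $G$ with $\langle G\xi,\xi\rangle>0$ for all nonzero $\xi\in D(G)$. For bounded metric $G$, $\mathcal H(G)$ is the completion of $\mathcal H$ under $\|\xi\|_G=\|G^{1/2}\xi\|$ with inner product $\langle\xi,\eta\rangle_G=\langle G^{1/2}\xi,G^{1/2}\eta\rangle$; $D(A)$ is dense in $\mathcal H(G)$, and "$A$ is self-adjoint in $\mathcal H(G)$" means $A=A^\#$, where $A^\#$ is the adjoint in $\mathcal H(G)$ of $A$ viewed as an operator in $\mathcal H(G)$ with domain $D(A)$. $A$ is quasi-Hermitian with respect to $G$ if $D(A)\subseteq D(G)$ and $\langle A\xi,G\eta\rangle=\langle G\xi,A\eta\rangle$ for all $\xi,\eta\in D(A)$. *)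

theory Defs
  imports "HOL-Analysis.Analysis"
begin

class complex_vector = real_vector +
  fixes scaleC :: "complex \<Rightarrow> 'a \<Rightarrow> 'a" (infixr "*\<^sub>C" 75)
  assumes scaleC_add_right: "a *\<^sub>C (x + y) = a *\<^sub>C x + a *\<^sub>C y"
    and scaleC_add_left: "(a + b) *\<^sub>C x = a *\<^sub>C x + b *\<^sub>C x"
    and scaleC_scaleC: "a *\<^sub>C (b *\<^sub>C x) = (a * b) *\<^sub>C x"
    and scaleC_one: "1 *\<^sub>C x = x"
    and scaleR_scaleC: "scaleR r x = complex_of_real r *\<^sub>C x"

class complex_inner = complex_vector + real_normed_vector +
  fixes cinner :: "'a \<Rightarrow> 'a \<Rightarrow> complex"
  assumes cinner_commute: "cinner x y = cnj (cinner y x)"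
    and cinner_add_left: "cinner (x + y) z = cinner x z + cinner y z"
    and cinner_scaleC_left: "cinner (a *\<^sub>C x) y = a * cinner x y"
    and cinner_Re_nonneg: "0 \<le> Re (cinner x x)"
    and cinner_eq_zero_iff: "cinner x x = 0 \<longleftrightarrow> x = 0"
    and norm_eq_sqrt_cinner: "norm x = sqrt (Re (cinner x x))"

class chilbert_space = complex_inner + complete_space

definition clinear :: "('a::complex_vector \<Rightarrow> 'b::complex_vector) \<Rightarrow> bool" where
  "clinear f \<longleftrightarrow> (\<forall>x y. f (x + y) = f x + f y) \<and> (\<forall>a x. f (a *\<^sub>C x) = a *\<^sub>C f x)"

definition csubspace :: "'a::complex_vector set \<Rightarrow> bool" where
  "csubspace D \<longleftrightarrow> 0 \<in> D \<and> (\<forall>x\<in>D. \<forall>y\<in>D. x + y \<in> D) \<and> (\<forall>a. \<forall>x\<in>D. a *\<^sub>C x \<in> D)"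

definition is_operator :: "'a::complex_vector set \<Rightarrow> ('a \<Rightarrow> 'a) \<Rightarrow> bool" where
  "is_operator D A \<longleftrightarrow> csubspace D \<and> (\<forall>x\<in>D. \<forall>y\<in>D. A (x + y) = A x + A y)
     \<and> (\<forall>a. \<forall>x\<in>D. A (a *\<^sub>C x) = a *\<^sub>C A x)"

definition graph :: "'a set \<Rightarrow> ('a \<Rightarrow> 'b) \<Rightarrow> ('a \<times> 'b) set" where
  "graph D A = {(x, A x) | x. x \<in> D}"

definition densely_defined :: "'a::topological_space set \<Rightarrow> bool" where
  "densely_defined D \<longleftrightarrow> closure D = UNIV"

definition closed_operator :: "'a::complex_inner set \<Rightarrow> ('a \<Rightarrow> 'a) \<Rightarrow> bool" where
  "closed_operator D A \<longleftrightarrow> is_operator D A \<and> closed (graph D A)"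

definition adjoint_graph :: "'a::complex_inner set \<Rightarrow> ('a \<Rightarrow> 'a) \<Rightarrow> ('a \<times> 'a) set" where
  "adjoint_graph D A = {(y, z). \<forall>x\<in>D. cinner (A x) y = cinner x z}"

definition symmetric_op :: "'a::complex_inner set \<Rightarrow> ('a \<Rightarrow> 'a) \<Rightarrow> bool" where
  "symmetric_op D A \<longleftrightarrow> densely_defined D \<and> graph D A \<subseteq> adjoint_graph D A"

definition self_adjoint_op :: "'a::complex_inner set \<Rightarrow> ('a \<Rightarrow> 'a) \<Rightarrow> bool" where
  "self_adjoint_op D A \<longleftrightarrow> densely_defined D \<and> adjoint_graph D A = graph D A"

definition bounded_metric_operator :: "('a::complex_inner \<Rightarrow> 'a) \<Rightarrow> bool" where
  "bounded_metric_operator G \<longleftrightarrow> clinear G \<and> (\<exists>C. \<forall>x. norm (G x) \<le> C * norm x)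
     \<and> (\<forall>x y. cinner (G x) y = cinner x (G y))
     \<and> (\<forall>x. x \<noteq> 0 \<longrightarrow> 0 < Re (cinner (G x) x))"

text \<open>J : H \<rightarrow> K realises K as (a model of) the completion H(G) of H under the inner product
  \<open>\<langle>x,y\<rangle>_G = \<langle>G^{1/2}x, G^{1/2}y\<rangle> = \<langle>Gx, y\<rangle>\<close>: J is linear, isometric for this
  inner product, and has dense range.\<close>
definition is_G_completion :: "('a::complex_inner \<Rightarrow> 'a) \<Rightarrow> ('a \<Rightarrow> 'b::chilbert_space) \<Rightarrow> bool" where
  "is_G_completion G J \<longleftrightarrow> clinear J \<and> (\<forall>x y. cinner (J x) (J y) = cinner (G x) y)
     \<and> closure (range J) = UNIV"

text \<open>A is self-adjoint in H(G): A = A^#, where A^# is the adjoint in H(G) of A viewed as an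
  operator in H(G) with domain D(A) (identified with J ` D).\<close>
definition self_adjoint_in_completion ::
  "('a::complex_inner \<Rightarrow> 'b::chilbert_space) \<Rightarrow> 'a set \<Rightarrow> ('a \<Rightarrow> 'a) \<Rightarrow> bool" where
  "self_adjoint_in_completion J D A \<longleftrightarrow>
     {(u, v). \<forall>x\<in>D. cinner (J (A x)) u = cinner (J x) v} = {(J x, J (A x)) | x. x \<in> D}"

text \<open>Quasi-Hermiticity w.r.t. a bounded G (the condition D(A) \<subseteq> D(G) = H is automatic).\<close>
definition quasi_hermitian :: "('a::complex_inner \<Rightarrow> 'a) \<Rightarrow> 'a set \<Rightarrow> ('a \<Rightarrow> 'a) \<Rightarrow> bool" where
  "quasi_hermitian G D A \<longleftrightarrow> (\<forall>x\<in>D. \<forall>y\<in>D. cinner (A x) (G y) = cinner (G x) (A y))"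

end

theory Submission
  imports Defs
begin


lemma scaleC_zero_left[simp]: "(0::complex) *\<^sub>C (x::'a::complex_vector) = 0"
  by (metis scaleR_scaleC scaleR_zero_left of_real_0)

lemma cinner_add_right: "cinner (x::'a::complex_inner) (y + z) = cinner x y + cinner x z"
  by (metis cinner_commute cinner_add_left complex_cnj_add)

lemma cinner_scaleC_right: "cinner (x::'a::complex_inner) (a *\<^sub>C y) = cnj a * cinner x y"
  by (metis cinner_commute cinner_scaleC_left complex_cnj_mult)

lemma cinner_scaleR_left: "cinner (r *\<^sub>R (x::'a::complex_inner)) y = of_real r * cinner x y"
  by (simp add: scaleR_scaleC cinner_scaleC_left)

lemma cinner_scaleR_right: "cinner (x::'a::complex_inner) (r *\<^sub>R y) = of_real r * cinner x y"
  by (simp add: scaleR_scaleC cinner_scaleC_right)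

lemma cinner_zero_left[simp]: "cinner 0 (y::'a::complex_inner) = 0"
  using cinner_add_left[of "0::'a" 0 y] by simp

lemma cinner_zero_right[simp]: "cinner (y::'a::complex_inner) 0 = 0"
  by (metis cinner_commute cinner_zero_left complex_cnj_zero)

lemma cinner_minus_left: "cinner (- x) (y::'a::complex_inner) = - cinner x y"
  using cinner_add_left[of x "-x" y] by (simp add: minus_unique)

lemma cinner_diff_left: "cinner (x - z) (y::'a::complex_inner) = cinner x y - cinner z y"
  using cinner_add_left[of x "-z" y] by (simp add: cinner_minus_left)

lemma cinner_diff_right: "cinner (y::'a::complex_inner) (x - z) = cinner y x - cinner y z"
  by (metis cinner_commute cinner_diff_left complex_cnj_diff)

lemma cinner_self: "cinner (x::'a::complex_inner) x = of_real ((norm x)^2)"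
proof -
  have "cinner x x = cnj (cinner x x)" by (rule cinner_commute)
  then have "Im (cinner x x) = Im (cnj (cinner x x))" by (rule arg_cong)
  then have "Im (cinner x x) = 0" by simp
  moreover have "Re (cinner x x) = (norm x)^2"
    using cinner_Re_nonneg[of x] by (simp only: norm_eq_sqrt_cinner[of x] real_sqrt_pow2)
  ultimately show ?thesis by (simp add: complex_eq_iff)
qed

lemma cinner_CS: "cmod (cinner (x::'a::complex_inner) y) \<le> norm x * norm y"
proof (cases "y = 0")
  case True then show ?thesis by simp
next
  case False
  define N where "N = (norm y)^2"
  have N: "N > 0" using False by (simp add: N_def)
  define c where "c = cinner x y"
  define a where "a = c / of_real N"
  have Nc: "(of_real N :: complex) \<noteq> 0" using N by simp
  have ca: "cnj a = cnj c / of_real N" by (simp add: a_def)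
  have e1: "cinner y x = cnj c" by (simp add: c_def cinner_commute[of y x])
  have e2: "cinner y y = of_real N" by (simp add: N_def cinner_self)
  have e3: "c * cnj c = of_real ((cmod c)^2)" by (metis complex_norm_square)
  have "cinner (x - a *\<^sub>C y) (x - a *\<^sub>C y)
     = cinner x x - cnj a * cinner x y - a * cinner y x + a * cnj a * cinner y y"
    by (simp add: cinner_diff_left cinner_diff_right cinner_scaleC_left cinner_scaleC_right algebra_simps)
  also have "\<dots> = cinner x x - (c * cnj c) / of_real N"
    unfolding e1 e2 ca c_def[symmetric] a_def using Nc by (simp add: field_simps)
  also have "\<dots> = of_real ((norm x)^2) - of_real ((cmod c)^2 / N)"
    by (simp add: e3 cinner_self)
  finally have "0 \<le> (norm x)^2 - (cmod c)^2 / N"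
    using cinner_Re_nonneg[of "x - a *\<^sub>C y"] by simp
  then have "(cmod c)^2 \<le> (norm x)^2 * N" using N by (simp add: field_simps)
  then have "(cmod c)^2 \<le> (norm x * norm y)^2" unfolding N_def by (simp only: power_mult_distrib)
  then show ?thesis unfolding c_def by (rule power2_le_imp_le) simp
qed



lemma clinear_scaleR: "clinear f \<Longrightarrow> f (r *\<^sub>R x) = r *\<^sub>R f x"
  by (simp add: clinear_def scaleR_scaleC)

lemma clinear_diff: "clinear f \<Longrightarrow> f (x - y) = f x - f y"
  unfolding clinear_def by (metis add_diff_cancel diff_add_cancel eq_diff_eq)

lemma clinear_zero: "clinear f \<Longrightarrow> f 0 = 0"
  using clinear_diff[of f 0 0] by simp

lemma graph_mem: "(a, b) \<in> graph D f \<longleftrightarrow> a \<in> D \<and> b = f a"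
  by (auto simp: graph_def)

lemma sq_bound_aux:
  fixes a b d M :: real
  assumes "a \<ge> 0" "b \<ge> 0" "d \<ge> 0" "M > 0" "a^2 \<le> b * d" "d^2 \<le> M * a^2"
  shows "a^2 \<le> M * b^2"
proof (cases "a = 0")
  case True then show ?thesis using assms by simp
next
  case False
  have "(a^2)^2 \<le> (b*d)^2" using assms by (intro power_mono) auto
  also have "\<dots> = b^2 * d^2" by (simp add: power_mult_distrib)
  also have "\<dots> \<le> b^2 * (M * a^2)" using assms by (simp add: mult_left_mono)
  finally have "a^2 * a^2 \<le> (M * b^2) * a^2" by (simp add: power2_eq_square algebra_simps)
  moreover have "a^2 > 0" using False by simp
  ultimately show ?thesis by (meson mult_le_cancel_right_pos)
qed


theorem proposition5p11:
  fixes G :: "'a::chilbert_space \<Rightarrow> 'a" and D :: "'a set" and A :: "'a \<Rightarrow> 'a"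
    and J :: "'a \<Rightarrow> 'b::chilbert_space"
  assumes "bounded_metric_operator G"
    and "closed_operator D A" and "densely_defined D"
    and "is_G_completion G J"
  shows "(self_adjoint_in_completion J D A \<longrightarrow>
            symmetric_op D (G \<circ> A) \<and> quasi_hermitian G D A)
       \<and> ((\<exists>C. \<forall>x. norm x \<le> C * norm (G x)) \<longrightarrow>
            (self_adjoint_in_completion J D A \<longleftrightarrow> self_adjoint_op D (G \<circ> A)))"
proof -
  have Glin: "clinear G" and Gb: "\<exists>C. \<forall>x. norm (G x) \<le> C * norm x"
    and Gsym: "\<And>x y. cinner (G x) y = cinner x (G y)"
    and Gpos: "\<And>x. x \<noteq> 0 \<Longrightarrow> 0 < Re (cinner (G x) x)"
    using assms(1) unfolding bounded_metric_operator_def by auto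
  have Jlin: "clinear J" and Jinn: "\<And>x y. cinner (J x) (J y) = cinner (G x) y"
    and Jdense: "closure (range J) = UNIV"
    using assms(4) unfolding is_G_completion_def by auto
  have dense: "densely_defined D" by fact
  have Jinj: "x = y" if "J x = J y" for x y
  proof (rule ccontr)
    assume "x \<noteq> y"
    then have "0 < Re (cinner (G (x - y)) (x - y))" using Gpos by simp
    moreover have "J (x - y) = 0" using that clinear_diff[OF Jlin] by simp
    ultimately show False using Jinn[of "x - y" "x - y"] by simp
  qed
  have Ginj: "x = y" if "G x = G y" for x y
  proof (rule ccontr)
    assume "x \<noteq> y"
    then have "0 < Re (cinner (G (x - y)) (x - y))" using Gpos by simp
    moreover have "G (x - y) = 0" using that clinear_diff[OF Glin] by simp
    ultimately show False by simp
  qed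
  have part1: "symmetric_op D (G \<circ> A) \<and> quasi_hermitian G D A"
    if sa: "self_adjoint_in_completion J D A"
  proof -
    have key: "cinner (G (A x)) y = cinner (G x) (A y)" if "x \<in> D" "y \<in> D" for x y
    proof -
      have "(J y, J (A y)) \<in> {(u, v). \<forall>x\<in>D. cinner (J (A x)) u = cinner (J x) v}"
        using sa \<open>y \<in> D\<close> unfolding self_adjoint_in_completion_def by blast
      then have "cinner (J (A x)) (J y) = cinner (J x) (J (A y))" using \<open>x \<in> D\<close> by auto
      then show ?thesis by (simp add: Jinn)
    qed
    have "symmetric_op D (G \<circ> A)"
      unfolding symmetric_op_def adjoint_graph_def
    proof (intro conjI dense subsetI)
      fix p assume "p \<in> graph D (G \<circ> A)"
      then obtain y where p: "p = (y, G (A y))" "y \<in> D" by (auto simp: graph_def)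
      show "p \<in> {(y, z). \<forall>x\<in>D. cinner ((G \<circ> A) x) y = cinner x z}"
        using p key by (auto simp: Gsym)
    qed
    moreover have "quasi_hermitian G D A"
      unfolding quasi_hermitian_def using key by (auto simp: Gsym[symmetric])
    ultimately show ?thesis by simp
  qed
  have part2: "self_adjoint_in_completion J D A \<longleftrightarrow> self_adjoint_op D (G \<circ> A)"
    if hC: "\<exists>C. \<forall>x. norm x \<le> C * norm (G x)"
  proof -
    obtain C0 where C0: "\<And>x. norm x \<le> C0 * norm (G x)" using hC by auto
    define C where "C = max C0 1"
    have C: "C > 0" "\<And>x. norm x \<le> C * norm (G x)"
    proof -
      show "C > 0" by (simp add: C_def)
      fix x :: 'a
      have "C0 * norm (G x) \<le> C * norm (G x)" by (intro mult_right_mono) (auto simp: C_def)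
      then show "norm x \<le> C * norm (G x)" using C0[of x] by linarith
    qed
    obtain M0 where M0: "\<And>x. norm (G x) \<le> M0 * norm x" using Gb by auto
    define M where "M = max M0 1"
    have M: "M > 0" "\<And>x. norm (G x) \<le> M * norm x"
    proof -
      show "M > 0" by (simp add: M_def)
      fix x :: 'a
      have "M0 * norm x \<le> M * norm x" by (intro mult_right_mono) (auto simp: M_def)
      then show "norm (G x) \<le> M * norm x" using M0[of x] by linarith
    qed
    define q where "q x = Re (cinner (G x) x)" for x
    have nJ: "(norm (J x))^2 = q x" for x
      using cinner_self[of "J x"] Jinn[of x x] unfolding q_def by (metis Re_complex_of_real)
    have up: "q x \<le> M * (norm x)^2" for x
    proof -
      have "q x \<le> cmod (cinner (G x) x)" unfolding q_def by (rule complex_Re_le_cmod)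
      also have "\<dots> \<le> norm (G x) * norm x" by (rule cinner_CS)
      also have "\<dots> \<le> M * norm x * norm x" using M(2)[of x] by (simp add: mult_right_mono)
      finally show ?thesis by (simp add: power2_eq_square mult.assoc)
    qed
    have gq: "(norm (G x))^2 \<le> M * q x" for x
    proof -
      have "(norm (G x))^2 = cmod (cinner (G x) (G x))"
        by (simp only: cinner_self norm_of_real) simp
      also have "\<dots> = cmod (cinner (J x) (J (G x)))" by (simp add: Jinn)
      also have "\<dots> \<le> norm (J x) * norm (J (G x))" by (rule cinner_CS)
      finally have a: "(norm (G x))^2 \<le> norm (J x) * norm (J (G x))" .
      have b: "(norm (J (G x)))^2 \<le> M * (norm (G x))^2" using nJ up by simp
      have "(norm (G x))^2 \<le> M * (norm (J x))^2"
        by (rule sq_bound_aux[OF _ _ _ M(1) a b]) auto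
      then show ?thesis using nJ by simp
    qed
    have lo: "(norm x)^2 \<le> (C^2 * M) * q x" for x
    proof -
      have "(norm x)^2 \<le> (C * norm (G x))^2" using C(2)[of x] by (simp add: power_mono)
      also have "\<dots> = C^2 * (norm (G x))^2" by (simp add: power_mult_distrib)
      also have "\<dots> \<le> C^2 * (M * q x)" using gq[of x] by (simp add: mult_left_mono)
      finally show ?thesis by (simp add: mult.assoc)
    qed
    have Gsurj: "\<exists>w. G w = z" for z
    proof -
      define t where "t = 1 / M"
      have t: "t > 0" "t * M = 1" using M(1) unfolding t_def by auto
      define e where "e = min (1 / (C^2 * M^2)) (1/2)"
      have e: "0 < e" "e \<le> 1/2" "e \<le> 1 / (C^2 * M^2)" using C M unfolding e_def by auto
      define k where "k = sqrt (1 - e)"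
      have k: "0 \<le> k" "k < 1" using e unfolding k_def by auto
      define T where "T w = w - t *\<^sub>R G w + t *\<^sub>R z" for w
      have contr: "norm (u - t *\<^sub>R G u) \<le> k * norm u" for u
      proof -
        have "cinner (u - t *\<^sub>R G u) (u - t *\<^sub>R G u)
           = cinner u u - of_real t * cinner (G u) u - of_real t * cinner u (G u)
             + of_real t * of_real t * cinner (G u) (G u)"
          by (simp add: cinner_diff_left cinner_diff_right cinner_scaleR_left cinner_scaleR_right algebra_simps)
        also have "\<dots> = of_real ((norm u)^2) - 2 * of_real t * cinner (G u) u
             + of_real t * of_real t * of_real ((norm (G u))^2)"
          by (simp add: cinner_self Gsym[of u u, symmetric])
        finally have h: "of_real ((norm (u - t *\<^sub>R G u))^2) = (of_real ((norm u)^2) - 2 * of_real t * cinner (G u) u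
             + of_real t * of_real t * of_real ((norm (G u))^2) :: complex)"
          by (simp only: cinner_self)
        have "(norm (u - t *\<^sub>R G u))^2 = Re (of_real ((norm u)^2) - 2 * of_real t * cinner (G u) u
             + of_real t * of_real t * of_real ((norm (G u))^2) :: complex)"
          using arg_cong[OF h, of Re] by (simp only: Re_complex_of_real)
        also have "\<dots> = (norm u)^2 - 2 * t * q u + t * t * (norm (G u))^2"
          unfolding q_def by simp
        finally have "(norm (u - t *\<^sub>R G u))^2 = (norm u)^2 - 2 * t * q u + t * t * (norm (G u))^2" .
        also have "\<dots> \<le> (norm u)^2 - 2 * t * q u + t * t * (M * q u)"
          using gq[of u] t by (simp add: mult_left_mono)
        also have "\<dots> = (norm u)^2 - t * q u" using t by (simp add: algebra_simps)
        also have "\<dots> \<le> (norm u)^2 - t * ((norm u)^2 / (C^2 * M))"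
        proof -
          have "(norm u)^2 / (C^2 * M) \<le> q u" using lo[of u] C M by (simp add: field_simps)
          then have "t * ((norm u)^2 / (C^2 * M)) \<le> t * q u" using t by (intro mult_left_mono) auto
          then show ?thesis by linarith
        qed
        also have "\<dots> = (norm u)^2 - (norm u)^2 / (C^2 * M^2)"
          unfolding t_def by (simp add: power2_eq_square field_simps)
        also have "\<dots> \<le> (norm u)^2 - e * (norm u)^2"
        proof -
          have "e * (norm u)^2 \<le> (1 / (C^2 * M^2)) * (norm u)^2" using e(3) by (intro mult_right_mono) auto
          then show ?thesis by simp
        qed
        also have "\<dots> = (k * norm u)^2"
        proof -
          have "k^2 = 1 - e" unfolding k_def using e(2) by simp
          then show ?thesis by (simp add: power_mult_distrib left_diff_distrib)
        qed
        finally have "(norm (u - t *\<^sub>R G u))^2 \<le> (k * norm u)^2" .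
        then show ?thesis by (rule power2_le_imp_le) (use k in simp)
      qed
      have "\<forall>x y. dist (T x) (T y) \<le> k * dist x y"
      proof (intro allI)
        fix x y
        have "T x - T y = (x - y) - t *\<^sub>R G (x - y)"
          unfolding T_def by (simp add: clinear_diff[OF Glin] algebra_simps)
        then show "dist (T x) (T y) \<le> k * dist x y"
          using contr[of "x - y"] by (simp add: dist_norm)
      qed
      then obtain w where "T w = w" using banach_fix_type[OF k(1) k(2)] by blast
      then have "z = G w \<or> t = 0" unfolding T_def by (simp add: algebra_simps)
      then have "G w = z" using t(1) by auto
      then show ?thesis by blast
    qed
    define K where "K = C * sqrt M"
    have K: "K > 0" using C M unfolding K_def by auto
    have Jlo: "norm x \<le> K * norm (J x)" for x
    proof -
      have "(K * norm (J x))^2 = C^2 * M * q x" unfolding K_def using M(1) nJ[of x]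
        by (simp add: power_mult_distrib)
      then have "(norm x)^2 \<le> (K * norm (J x))^2" using lo[of x] by simp
      then show ?thesis by (rule power2_le_imp_le) (use K in simp)
    qed
    have Jbl: "bounded_linear J"
    proof (rule bounded_linear_intro[where K="sqrt M"])
      show "J (x + y) = J x + J y" for x y using Jlin by (simp add: clinear_def)
      show "J (r *\<^sub>R x) = r *\<^sub>R J x" for r x using clinear_scaleR[OF Jlin] .
      show "norm (J x) \<le> norm x * sqrt M" for x
      proof -
        have "(norm x * sqrt M)^2 = M * (norm x)^2" using M(1) by (simp add: power_mult_distrib)
        then have "(norm (J x))^2 \<le> (norm x * sqrt M)^2"
          using nJ[of x] up[of x] by simp
        then show ?thesis by (rule power2_le_imp_le) (use M in simp)
      qed
    qed
    have Jsurj: "\<exists>y. J y = u" for u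
    proof -
      have "u \<in> closure (range J)" using Jdense by simp
      then obtain X where X: "\<And>n. X n \<in> range J" "X \<longlonglongrightarrow> u"
        unfolding closure_sequential by blast
      have "\<exists>y. J y = X n" for n
      proof -
        from X(1)[of n] obtain y where "X n = J y" by blast
        then show ?thesis by (intro exI[of _ y]) simp
      qed
      then have "\<forall>n. \<exists>y. J y = X n" by blast
      from choice[OF this] obtain x where x0: "\<forall>n. J (x n) = X n" by blast
      have x: "\<And>n. J (x n) = X n" using x0 by blast
      have "Cauchy X" using X(2) by (rule LIMSEQ_imp_Cauchy)
      have "Cauchy x"
      proof (rule CauchyI)
        fix e :: real assume "0 < e"
        then obtain N where N: "\<forall>m\<ge>N. \<forall>n\<ge>N. norm (X m - X n) < e / K"
          using CauchyD[OF \<open>Cauchy X\<close>, of "e / K"] K by auto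
        have "\<forall>m\<ge>N. \<forall>n\<ge>N. norm (x m - x n) < e"
        proof (intro allI impI)
          fix m n assume "m \<ge> N" "n \<ge> N"
          then have "norm (X m - X n) < e / K" using N by auto
          moreover have "norm (x m - x n) \<le> K * norm (X m - X n)"
            using Jlo[of "x m - x n"] by (simp add: clinear_diff[OF Jlin] x)
          moreover have "K * norm (X m - X n) < K * (e / K)"
            using K \<open>norm (X m - X n) < e / K\<close> by (rule mult_strict_left_mono[rotated])
          moreover have "K * (e / K) = e" using K by simp
          ultimately show "norm (x m - x n) < e" by linarith
        qed
        then show "\<exists>N. \<forall>m\<ge>N. \<forall>n\<ge>N. norm (x m - x n) < e" by blast
      qed
      then obtain y where "x \<longlonglongrightarrow> y" using Cauchy_convergent_iff convergent_def by blast
      then have "(\<lambda>n. J (x n)) \<longlonglongrightarrow> J y" using bounded_linear.tendsto[OF Jbl] by blast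
      then have "X \<longlonglongrightarrow> J y" using x by simp
      then have "J y = u" using X(2) LIMSEQ_unique by blast
      then show ?thesis by blast
    qed
    show ?thesis
    proof
      assume sa: "self_adjoint_in_completion J D A"
      have sym: "symmetric_op D (G \<circ> A)" using part1[OF sa] by simp
      have "adjoint_graph D (G \<circ> A) \<subseteq> graph D (G \<circ> A)"
      proof
        fix p assume "p \<in> adjoint_graph D (G \<circ> A)"
        then obtain y z where p: "p = (y, z)" and h: "\<And>x. x \<in> D \<Longrightarrow> cinner (G (A x)) y = cinner x z"
          unfolding adjoint_graph_def by auto
        obtain w where w: "G w = z" using Gsurj by blast
        have "(J y, J w) \<in> {(u, v). \<forall>x\<in>D. cinner (J (A x)) u = cinner (J x) v}"
          using h w by (auto simp: Jinn Gsym)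
        then have "(J y, J w) \<in> {(J x, J (A x)) | x. x \<in> D}"
          using sa unfolding self_adjoint_in_completion_def by simp
        then obtain x' where "J y = J x'" "J w = J (A x')" "x' \<in> D" by auto
        then have "y = x'" "w = A x'" using Jinj by auto
        then show "p \<in> graph D (G \<circ> A)" using p w \<open>x' \<in> D\<close> by (simp add: graph_mem)
      qed
      moreover have "graph D (G \<circ> A) \<subseteq> adjoint_graph D (G \<circ> A)"
        using sym unfolding symmetric_op_def by simp
      ultimately show "self_adjoint_op D (G \<circ> A)"
        unfolding self_adjoint_op_def using dense by blast
    next
      assume sa: "self_adjoint_op D (G \<circ> A)"
      then have eq: "adjoint_graph D (G \<circ> A) = graph D (G \<circ> A)"
        unfolding self_adjoint_op_def by simp
      show "self_adjoint_in_completion J D A"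
        unfolding self_adjoint_in_completion_def
      proof (intro set_eqI iffI)
        fix p assume "p \<in> {(u, v). \<forall>x\<in>D. cinner (J (A x)) u = cinner (J x) v}"
        then obtain u v where p: "p = (u, v)" and h: "\<And>x. x \<in> D \<Longrightarrow> cinner (J (A x)) u = cinner (J x) v"
          by auto
        obtain y where y: "J y = u" using Jsurj by blast
        obtain w where w: "J w = v" using Jsurj by blast
        have "(y, G w) \<in> adjoint_graph D (G \<circ> A)"
          unfolding adjoint_graph_def using h y w by (auto simp: Jinn Gsym)
        then have "y \<in> D" "G w = G (A y)" using eq by (auto simp: graph_mem)
        then have "w = A y" using Ginj by blast
        then show "p \<in> {(J x, J (A x)) | x. x \<in> D}" using p y w \<open>y \<in> D\<close> by auto
      next
        fix p assume "p \<in> {(J x, J (A x)) | x. x \<in> D}"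
        then obtain y where p: "p = (J y, J (A y))" "y \<in> D" by auto
        then have "(y, G (A y)) \<in> adjoint_graph D (G \<circ> A)" using eq by (simp add: graph_mem)
        then have "\<And>x. x \<in> D \<Longrightarrow> cinner (G (A x)) y = cinner x (G (A y))"
          unfolding adjoint_graph_def by auto
        then show "p \<in> {(u, v). \<forall>x\<in>D. cinner (J (A x)) u = cinner (J x) v}"
          using p by (auto simp: Jinn Gsym)
      qed
    qed
  qed
  show ?thesis using part1 part2 by blast
qed

end
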